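(* Let $(X,d_X)$ be a compact metric space and $\{U_i\}_{i=1}^N$ a finite open cover of $X$. Suppose that for each $i$ there are a map $f_i:U_i\to X$ and constants $L_i>1$, $\alpha_i\ge1$, $C_i>0$ such that for all $x,y,z\in U_i$ with $x\ne y$, $x\ne z$: (1) $d_X(f_i(x),f_i(y))\ge L_i\,d_X(x,y)$; (2) $\frac{d_X(f_i(x),f_i(y))}{d_X(x,y)}-\frac{d_X(f_i(x),f_i(z))}{d_X(x,z)}\le C_i\operatorname{diam}(\{x,y,z\})^{\alpha_i}$. Then $X$ is quasi-self-similar.
   Context: A metric space $X$ is ($H$-)quasi-self-similar if there exist $r_0>0$ and $H\ge1$ such that for every ball $B$ of radius $r<r_0$ there is a map $f_B:B\to X$ with $\frac1H\frac{r_0}{r}d_X(x,y)\le d_X(f_B(x),f_B(y))\le H\frac{r_0}{r}d_X(x,y)$ for all $x,y\in B$. *)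

theory Defs
  imports "HOL-Analysis.Analysis"
begin

text \<open>A metric space is modelled as a subset X of a metric_space type, with the
induced metric. Balls in X are the sets ball x r \<inter> X with centre x \<in> X and radius r > 0.\<close>

definition quasi_self_similar :: "'a::metric_space set \<Rightarrow> bool" where
  "quasi_self_similar X \<longleftrightarrow>
     (\<exists>r0>0. \<exists>H\<ge>1. \<forall>x\<in>X. \<forall>r. 0 < r \<and> r < r0 \<longrightarrow>
        (\<exists>f. f ` (ball x r \<inter> X) \<subseteq> X \<and>
             (\<forall>y\<in>ball x r \<inter> X. \<forall>z\<in>ball x r \<inter> X.
                 (1 / H) * (r0 / r) * dist y z \<le> dist (f y) (f z) \<and>
                 dist (f y) (f z) \<le> H * (r0 / r) * dist y z)))"

end

theory Submission
  imports Defs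
begin

lemma diam_le_metric:
  fixes S :: "'a::metric_space set"
  assumes "0 \<le> t" "\<And>x y. x \<in> S \<Longrightarrow> y \<in> S \<Longrightarrow> dist x y \<le> t"
  shows "diameter S \<le> t"
  using assms by (auto simp: diameter_def intro: cSUP_least)

lemma diam3_bound:
  fixes x y z :: "'a::metric_space"
  assumes "0 \<le> t" "dist x y \<le> t" "dist x z \<le> t" "dist y z \<le> t"
  shows "0 \<le> diameter {x,y,z} \<and> diameter {x,y,z} \<le> t"
proof
  have "bounded {x,y,z}" by (simp add: finite_imp_bounded)
  then have "dist x x \<le> diameter {x,y,z}" by (intro diameter_bounded_bound) auto
  then show "0 \<le> diameter {x,y,z}" by simp
  show "diameter {x,y,z} \<le> t"
    using assms by (intro diam_le_metric) (auto simp: dist_commute)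
qed

lemma ratio_close3:
  fixes F :: "'a::metric_space \<Rightarrow> 'a"
  assumes H2: "\<And>x y z. x\<in>U \<Longrightarrow> y\<in>U \<Longrightarrow> z\<in>U \<Longrightarrow> x\<noteq>y \<Longrightarrow> x\<noteq>z \<Longrightarrow>
      dist (F x) (F y)/dist x y - dist (F x) (F z)/dist x z \<le> Ci * diameter {x,y,z} powr ai"
    and "Ci \<ge> 0" "ai \<ge> 0" "t \<ge> 0"
    and "x\<in>U" "y\<in>U" "z\<in>U" "x\<noteq>y" "x\<noteq>z"
    and "dist x y \<le> t" "dist x z \<le> t" "dist y z \<le> t"
  shows "dist (F x) (F y)/dist x y \<le> dist (F x) (F z)/dist x z + Ci * t powr ai"
proof -
  from diam3_bound[of t x y z] assms have d: "0 \<le> diameter {x,y,z}" "diameter {x,y,z} \<le> t" by auto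
  have "diameter {x,y,z} powr ai \<le> t powr ai" using d assms by (intro powr_mono2) auto
  then have "Ci * diameter {x,y,z} powr ai \<le> Ci * t powr ai" using assms by (intro mult_left_mono) auto
  with H2[OF assms(5-9)] show ?thesis by linarith
qed

lemma ratio_close:
  fixes F :: "'a::metric_space \<Rightarrow> 'a"
  assumes H2: "\<And>x y z. x\<in>U \<Longrightarrow> y\<in>U \<Longrightarrow> z\<in>U \<Longrightarrow> x\<noteq>y \<Longrightarrow> x\<noteq>z \<Longrightarrow>
      dist (F x) (F y)/dist x y - dist (F x) (F z)/dist x z \<le> Ci * diameter {x,y,z} powr ai"
    and "Ci \<ge> 0" "ai \<ge> 0" "t \<ge> 0"
    and U: "a\<in>U" "b\<in>U" "a'\<in>U" "b'\<in>U" and ne: "a\<noteq>b" "a'\<noteq>b'"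
    and P: "\<And>p q. p \<in> {a,b,a',b'} \<Longrightarrow> q \<in> {a,b,a',b'} \<Longrightarrow> dist p q \<le> t"
  shows "dist (F a) (F b)/dist a b \<le> dist (F a') (F b')/dist a' b' + 2 * Ci * t powr ai"
proof (cases "a = a'")
  case True
  have "dist (F a) (F b)/dist a b \<le> dist (F a) (F b')/dist a b' + Ci * t powr ai"
    using True by (intro ratio_close3[OF H2]) (use assms in auto)
  moreover have "0 \<le> Ci * t powr ai" using assms by simp
  ultimately show ?thesis using True by simp
next
  case False
  have 1: "dist (F a) (F b)/dist a b \<le> dist (F a) (F a')/dist a a' + Ci * t powr ai"
    using False by (intro ratio_close3[OF H2]) (use assms in auto)
  have 2: "dist (F a') (F a)/dist a' a \<le> dist (F a') (F b')/dist a' b' + Ci * t powr ai"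
    using False by (intro ratio_close3[OF H2]) (use assms in auto)
  from 1 2 show ?thesis by (simp add: dist_commute)
qed


lemma ratio_bound:
  fixes F :: "'a::metric_space \<Rightarrow> 'a"
  assumes "compact X" "U \<subseteq> X"
    and H2: "\<And>x y z. x\<in>U \<Longrightarrow> y\<in>U \<Longrightarrow> z\<in>U \<Longrightarrow> x\<noteq>y \<Longrightarrow> x\<noteq>z \<Longrightarrow>
      dist (F x) (F y)/dist x y - dist (F x) (F z)/dist x z \<le> Ci * diameter {x,y,z} powr ai"
    and "Ci \<ge> 0" "ai \<ge> 0"
  shows "\<exists>Mr. \<forall>a\<in>U. \<forall>b\<in>U. a \<noteq> b \<longrightarrow> dist a b \<le> 1 \<longrightarrow> dist (F a) (F b)/dist a b \<le> Mr"
proof -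
  obtain k where k: "finite k" "X \<subseteq> (\<Union>x\<in>k. ball x 1)"
    using seq_compact_imp_totally_bounded[OF compact_imp_seq_compact[OF assms(1)], rule_format, of 1] by auto
  define Pr where "Pr c \<longleftrightarrow> (\<exists>p q. p\<in>U \<and> q\<in>U \<and> p\<noteq>q \<and> p\<in>ball c 2 \<and> q\<in>ball c 2)" for c
  define pq where "pq c = (SOME pq. fst pq\<in>U \<and> snd pq\<in>U \<and> fst pq\<noteq>snd pq \<and> fst pq\<in>ball c 2 \<and> snd pq\<in>ball c 2)" for c
  define R where "R c = dist (F (fst (pq c))) (F (snd (pq c))) / dist (fst (pq c)) (snd (pq c))" for c
  have pq: "fst (pq c)\<in>U \<and> snd (pq c)\<in>U \<and> fst (pq c)\<noteq>snd (pq c) \<and> fst (pq c)\<in>ball c 2 \<and> snd (pq c)\<in>ball c 2"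
    if "Pr c" for c
  proof -
    from that obtain p q where "p\<in>U \<and> q\<in>U \<and> p\<noteq>q \<and> p\<in>ball c 2 \<and> q\<in>ball c 2" unfolding Pr_def by blast
    then have "\<exists>pq. fst pq\<in>U \<and> snd pq\<in>U \<and> fst pq\<noteq>snd pq \<and> fst pq\<in>ball c 2 \<and> snd pq\<in>ball c 2"
      by (intro exI[of _ "(p,q)"]) auto
    then show ?thesis unfolding pq_def by (rule someI_ex)
  qed
  show ?thesis
  proof (intro exI[of _ "(\<Sum>c\<in>k. \<bar>R c\<bar>) + 2 * Ci * 4 powr ai"] ballI impI)
    fix a b assume ab: "a \<in> U" "b \<in> U" "a \<noteq> b" "dist a b \<le> 1"
    have "a \<in> (\<Union>x\<in>k. ball x 1)" using k(2) assms(2) ab(1) by blast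
    then obtain c where c: "c \<in> k" "dist c a < 1" by auto
    have cb: "dist c b < 2" using c ab dist_triangle[of c b a] by simp
    have "Pr c" unfolding Pr_def using ab c cb by (intro exI[of _ a] exI[of _ b]) auto
    note P = pq[OF this]
    define p where "p = fst (pq c)"
    define q where "q = snd (pq c)"
    have all: "\<And>u. u \<in> {a,b,p,q} \<Longrightarrow> dist c u < 2" using c cb P p_def q_def by auto
    have P4: "\<And>u v. u \<in> {a,b,p,q} \<Longrightarrow> v \<in> {a,b,p,q} \<Longrightarrow> dist u v \<le> 4"
    proof -
      fix u v assume "u \<in> {a,b,p,q}" "v \<in> {a,b,p,q}"
      then have "dist c u < 2" "dist c v < 2" using all by auto
      then show "dist u v \<le> 4" using dist_triangle[of u v c] by (simp add: dist_commute)
    qed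
    have Pp: "p \<in> U" "q \<in> U" "p \<noteq> q" using P p_def q_def by auto
    have "dist (F a) (F b)/dist a b \<le> dist (F p) (F q)/dist p q + 2 * Ci * 4 powr ai"
      by (rule ratio_close[OF H2 _ _ _ _ _ _ _ _ _ P4]) (use assms ab Pp in auto)
    also have "\<dots> = R c + 2 * Ci * 4 powr ai" unfolding R_def p_def q_def by simp
    also have "R c + 2 * Ci * 4 powr ai \<le> (\<Sum>c\<in>k. \<bar>R c\<bar>) + 2 * Ci * 4 powr ai"
      using member_le_sum[of c k "\<lambda>c. \<bar>R c\<bar>"] c k by auto
    finally show "dist (F a) (F b)/dist a b \<le> (\<Sum>c\<in>k. \<bar>R c\<bar>) + 2 * Ci * 4 powr ai" by simp
  qed
qed


lemma lebesgue_balls: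
  fixes X :: "'a::metric_space set"
  assumes "compact X" "\<And>i. i\<in>I \<Longrightarrow> openin (top_of_set X) (U i)" "X = (\<Union>i\<in>I. U i)" "I \<noteq> {}"
  shows "\<exists>\<delta>>0. \<forall>a\<in>X. \<exists>i\<in>I. X \<inter> ball a \<delta> \<subseteq> U i"
proof -
  have "\<forall>i\<in>I. \<exists>V. open V \<and> U i = X \<inter> V" using assms(2) by (simp add: openin_open)
  then obtain V where V: "\<And>i. i\<in>I \<Longrightarrow> open (V i) \<and> U i = X \<inter> V i" by metis
  have cov: "X \<subseteq> \<Union>(V ` I)" using assms(3) V by blast
  obtain \<delta> where d: "0 < \<delta>" "\<And>T. \<lbrakk>T \<subseteq> X; diameter T < \<delta>\<rbrakk> \<Longrightarrow> \<exists>B \<in> V ` I. T \<subseteq> B"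
    using Lebesgue_number_lemma[OF assms(1) _ cov] V assms(4) by blast
  show ?thesis
  proof (intro exI[of _ "\<delta>/3"] conjI ballI)
    show "0 < \<delta>/3" using d by simp
    fix a assume "a \<in> X"
    have "diameter (X \<inter> ball a (\<delta>/3)) \<le> 2*\<delta>/3"
    proof (rule diam_le_metric)
      fix x y assume "x \<in> X \<inter> ball a (\<delta>/3)" "y \<in> X \<inter> ball a (\<delta>/3)"
      then show "dist x y \<le> 2*\<delta>/3" using dist_triangle[of x y a] by (simp add: dist_commute)
    qed (use d in simp)
    then have "diameter (X \<inter> ball a (\<delta>/3)) < \<delta>" using d(1) by linarith
    then obtain B where "B \<in> V ` I" "X \<inter> ball a (\<delta>/3) \<subseteq> B" using d(2)[of "X \<inter> ball a (\<delta>/3)"] by blast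
    then obtain i where "i \<in> I" "X \<inter> ball a (\<delta>/3) \<subseteq> V i" by blast
    then show "\<exists>i\<in>I. X \<inter> ball a (\<delta>/3) \<subseteq> U i" using V by blast
  qed
qed

lemma step_lemma:
  fixes F :: "'a::metric_space \<Rightarrow> 'a"
  assumes H1: "\<And>x y. x\<in>U \<Longrightarrow> y\<in>U \<Longrightarrow> x\<noteq>y \<Longrightarrow> dist (F x) (F y) \<ge> Li * dist x y"
    and H2: "\<And>x y z. x\<in>U \<Longrightarrow> y\<in>U \<Longrightarrow> z\<in>U \<Longrightarrow> x\<noteq>y \<Longrightarrow> x\<noteq>z \<Longrightarrow>
      dist (F x) (F y)/dist x y - dist (F x) (F z)/dist x z \<le> Ci * diameter {x,y,z} powr ai"
    and MR: "\<And>a b. a\<in>U \<Longrightarrow> b\<in>U \<Longrightarrow> a \<noteq> b \<Longrightarrow> dist a b \<le> 1 \<Longrightarrow> dist (F a) (F b)/dist a b \<le> Mr"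
    and par: "Lmin \<le> Li" "0 \<le> Ci" "Ci \<le> Cmax" "1 \<le> ai"
    and S: "S \<subseteq> U" "0 \<le> t" "t \<le> 1" "\<And>y z. y\<in>S \<Longrightarrow> z\<in>S \<Longrightarrow> dist y z \<le> t"
  shows "\<exists>lam. Lmin \<le> lam \<and> lam \<le> max Lmin Mr \<and> (\<forall>y\<in>S. \<forall>z\<in>S. y \<noteq> z \<longrightarrow>
      lam * dist y z \<le> dist (F y) (F z) \<and> dist (F y) (F z) \<le> (lam + 4*Cmax*t) * dist y z)"
proof (cases "\<exists>a\<in>S. \<exists>b\<in>S. a \<noteq> b")
  case False
  then show ?thesis by (intro exI[of _ Lmin]) auto
next
  case True
  then obtain a b where ab: "a\<in>S" "b\<in>S" "a\<noteq>b" by blast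
  define \<rho> where "\<rho> y z = dist (F y) (F z)/dist y z" for y z
  define e where "e = 2*Ci*t powr ai"
  have tp: "t powr ai \<le> t"
  proof (cases "t = 0")
    case False then show ?thesis using S par by (intro powr_le_one_le) auto
  qed simp
  have "Ci * t powr ai \<le> Cmax * t" using tp par S by (intro mult_mono) auto
  then have e: "e \<le> 2*Cmax*t" unfolding e_def by simp
  have e0: "0 \<le> e" unfolding e_def using par by simp
  have cl: "\<rho> y z \<le> \<rho> y' z' + e" if "y\<in>S" "z\<in>S" "y'\<in>S" "z'\<in>S" "y\<noteq>z" "y'\<noteq>z'" for y z y' z'
    unfolding \<rho>_def e_def
    by (rule ratio_close[OF H2]) (use that S par in auto)
  define lam where "lam = max Lmin (\<rho> a b - e)"
  have "\<rho> a b \<le> Mr" unfolding \<rho>_def using ab S(1,3) S(4)[of a b] by (intro MR) auto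
  then have lam: "Lmin \<le> lam" "lam \<le> max Lmin Mr" unfolding lam_def using e e0 par S by auto
  show ?thesis
  proof (intro exI[of _ lam] conjI lam ballI impI)
    fix y z assume yz: "y\<in>S" "z\<in>S" "y\<noteq>z"
    have dpos: "0 < dist y z" using yz by simp
    have "Li * dist y z \<le> dist (F y) (F z)" using H1 yz S by auto
    then have "Li \<le> \<rho> y z" unfolding \<rho>_def using dpos by (simp add: pos_le_divide_eq)
    moreover have "\<rho> a b \<le> \<rho> y z + e" "\<rho> y z \<le> \<rho> a b + e" using cl yz ab by auto
    ultimately have r: "lam \<le> \<rho> y z" "\<rho> y z \<le> lam + 4*Cmax*t" unfolding lam_def using par e by auto
    have eq: "dist (F y) (F z) = \<rho> y z * dist y z" unfolding \<rho>_def using dpos by simp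
    show "lam * dist y z \<le> dist (F y) (F z)" unfolding eq using r dpos by (intro mult_right_mono) auto
    show "dist (F y) (F z) \<le> (lam + 4*Cmax*t) * dist y z" unfolding eq using r dpos by (intro mult_right_mono) auto
  qed
qed


context
  fixes X :: "'a::metric_space set" and N :: nat and U :: "nat \<Rightarrow> 'a set" and f :: "nat \<Rightarrow> 'a \<Rightarrow> 'a"
    and Lmin Cmax K A r0 \<delta> :: real
  assumes stp: "\<And>i S t. i\<in>{1..N} \<Longrightarrow> S \<subseteq> U i \<Longrightarrow> 0 \<le> t \<Longrightarrow> t \<le> 1 \<Longrightarrow>
        (\<And>y z. y\<in>S \<Longrightarrow> z\<in>S \<Longrightarrow> dist y z \<le> t) \<Longrightarrow>
        \<exists>lam. Lmin \<le> lam \<and> lam \<le> K \<and> (\<forall>y\<in>S. \<forall>z\<in>S. y \<noteq> z \<longrightarrow>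
          lam * dist y z \<le> dist (f i y) (f i z) \<and> dist (f i y) (f i z) \<le> (lam + 4*Cmax*t) * dist y z)"
    and maps: "\<And>i. i\<in>{1..N} \<Longrightarrow> f i ` U i \<subseteq> X"
    and leb: "\<And>a. a\<in>X \<Longrightarrow> \<exists>i\<in>{1..N}. X \<inter> ball a \<delta> \<subseteq> U i"
    and Lm: "1 < Lmin" and Cm: "0 \<le> Cmax" and KL: "Lmin \<le> K"
    and Adef: "A = 8*Cmax/(Lmin-1)"
    and r0: "0 < r0" "4*r0 \<le> 1" "2*r0 \<le> \<delta>" "exp(2*A*K*r0) \<le> 2"
begin

lemma A_nonneg: "0 \<le> A" using Adef Lm Cm by simp

lemma M_le_2m:
  assumes "0 < r" "1 \<le> m" "M \<le> m*exp(2*A*r*m)" "m \<le> K*r0/r"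
  shows "M \<le> 2*m"
proof -
  have "r*m \<le> K*r0" using assms by (simp add: pos_le_divide_eq mult.commute)
  then have "2*A*r*m \<le> 2*A*K*r0" using A_nonneg
    by (metis (no_types, opaque_lifting) mult.assoc mult_left_mono zero_le_numeral mult_nonneg_nonneg)
  then have "exp(2*A*r*m) \<le> 2" using r0(4) by (meson exp_le_cancel_iff order_trans)
  then have "m*exp(2*A*r*m) \<le> m*2" using assms by (intro mult_left_mono) auto
  then show ?thesis using assms(3) by linarith
qed

lemma stop_case:
  assumes "0<r" "g ` (ball x r \<inter> X) \<subseteq> X" "1 \<le> m"
    "\<forall>y\<in>ball x r \<inter> X. \<forall>z\<in>ball x r \<inter> X. m*dist y z \<le> dist (g y) (g z) \<and> dist (g y) (g z) \<le> M*dist y z"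
    "M \<le> m*exp(2*A*r*m)" "m \<le> K*r0/r" "r0/r \<le> m"
  shows "\<exists>F. F ` (ball x r \<inter> X) \<subseteq> X \<and> (\<forall>y\<in>ball x r \<inter> X. \<forall>z\<in>ball x r \<inter> X.
           (1/(2*K))*(r0/r)*dist y z \<le> dist (F y) (F z) \<and> dist (F y) (F z) \<le> (2*K)*(r0/r)*dist y z)"
proof (intro exI[of _ g] conjI ballI)
  show "g ` (ball x r \<inter> X) \<subseteq> X" by fact
  fix y z assume yz: "y \<in> ball x r \<inter> X" "z \<in> ball x r \<inter> X"
  have M2: "M \<le> 2*m" using M_le_2m assms by blast
  have K1: "1 \<le> K" using KL Lm by simp
  have q: "0 \<le> r0/r * dist y z" using r0 assms by simp
  have "(1/(2*K))*(r0/r*dist y z) \<le> 1 * (r0/r*dist y z)"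
    by (rule mult_right_mono[OF _ q]) (use K1 in simp)
  then have "(1/(2*K))*(r0/r)*dist y z \<le> 1 * (r0/r*dist y z)" by (simp add: mult.assoc)
  also have "\<dots> \<le> m * dist y z" using mult_right_mono[OF assms(7) zero_le_dist[of y z]] by simp
  also have "\<dots> \<le> dist (g y) (g z)" using assms(4) yz by blast
  finally show "(1/(2*K))*(r0/r)*dist y z \<le> dist (g y) (g z)" .
  have "dist (g y) (g z) \<le> M*dist y z" using assms(4) yz by blast
  also have "\<dots> \<le> (2*m)*dist y z" using mult_right_mono[OF M2 zero_le_dist[of y z]] by simp
  also have "\<dots> \<le> (2*(K*r0/r))*dist y z" using mult_right_mono[OF assms(6) zero_le_dist[of y z]] by simp
  finally show "dist (g y) (g z) \<le> (2*K)*(r0/r)*dist y z" by simp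
qed

lemma step_case:
  assumes r: "0<r" and x: "x \<in> X" and g: "g ` (ball x r \<inter> X) \<subseteq> X" and m1: "1 \<le> m"
    and bd: "\<forall>y\<in>ball x r \<inter> X. \<forall>z\<in>ball x r \<inter> X. m*dist y z \<le> dist (g y) (g z) \<and> dist (g y) (g z) \<le> M*dist y z"
    and Mm: "M \<le> m*exp(2*A*r*m)" and mK: "m \<le> K*r0/r" and mlt: "m < r0/r"
  shows "\<exists>g' m' M'. g' ` (ball x r \<inter> X) \<subseteq> X \<and> 1 \<le> m' \<and>
     (\<forall>y\<in>ball x r \<inter> X. \<forall>z\<in>ball x r \<inter> X. m'*dist y z \<le> dist (g' y) (g' z) \<and> dist (g' y) (g' z) \<le> M'*dist y z)
     \<and> M' \<le> m'*exp(2*A*r*m') \<and> m' \<le> K*r0/r \<and> m*Lmin \<le> m'"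
proof -
  define B where "B = ball x r \<inter> X"
  define M0 where "M0 = max M m"
  have A0: "0 \<le> A" by (rule A_nonneg)
  have e1: "1 \<le> exp(2*A*r*m)" using A0 r m1 by simp
  have "m \<le> m*exp(2*A*r*m)" using e1 m1 by simp
  then have M0e: "M0 \<le> m*exp(2*A*r*m)" unfolding M0_def using Mm by simp
  have M02: "M0 \<le> 2*m" using M_le_2m[OF r m1 M0e mK] .
  have M0m: "m \<le> M0" "1 \<le> M0" unfolding M0_def using m1 by auto
  have bd0: "m*dist y z \<le> dist (g y) (g z)" "dist (g y) (g z) \<le> M0*dist y z" if "y\<in>B" "z\<in>B" for y z
  proof -
    show "m*dist y z \<le> dist (g y) (g z)" using bd that unfolding B_def by blast
    have "M*dist y z \<le> M0*dist y z" unfolding M0_def by (simp add: mult_right_mono)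
    moreover have "dist (g y) (g z) \<le> M*dist y z" using bd that unfolding B_def by blast
    ultimately show "dist (g y) (g z) \<le> M0*dist y z" by linarith
  qed
  have mr: "m*r < r0" using mlt r by (simp add: pos_less_divide_eq)
  have xB: "x \<in> B" unfolding B_def using x r by simp
  have gX: "g y \<in> X" if "y \<in> B" for y using g that unfolding B_def by blast
  obtain i where i: "i\<in>{1..N}" "X \<inter> ball (g x) \<delta> \<subseteq> U i" using leb[OF gX[OF xB]] by blast
  define S where "S = g ` B"
  have dB: "dist y z \<le> 2*r" if "y\<in>B" "z\<in>B" for y z
    using that dist_triangle[of y z x] unfolding B_def by (simp add: dist_commute)
  have "M0*r \<le> (2*m)*r" using M02 r by (intro mult_right_mono) auto
  then have M0r: "M0*r < 2*r0" using mr by linarith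
  have SU: "S \<subseteq> U i"
  proof
    fix w assume "w \<in> S"
    then obtain y where y: "y \<in> B" "w = g y" unfolding S_def by blast
    have "dist x y < r" using y unfolding B_def by simp
    then have "M0*dist x y \<le> M0*r" using M0m by simp
    then have "dist (g x) (g y) < \<delta>" using bd0(2)[OF xB y(1)] M0r r0 by linarith
    then show "w \<in> U i" using i y gX by auto
  qed
  define t where "t = 2*r*M0"
  have t0: "0 \<le> t" unfolding t_def using r M0m by simp
  have "t = 2*(M0*r)" unfolding t_def by simp
  then have t1: "t \<le> 1" using M0r r0 by linarith
  have pw: "dist y z \<le> t" if yS: "y\<in>S" "z\<in>S" for y z
  proof -
    obtain y' z' where yz: "y'\<in>B" "z'\<in>B" "y = g y'" "z = g z'" using yS unfolding S_def by blast
    have "M0*dist y' z' \<le> M0*(2*r)" using dB[OF yz(1,2)] M0m by simp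
    moreover have "M0*(2*r) = 2*r*M0" by simp
    ultimately show ?thesis using bd0(2)[OF yz(1,2)] unfolding yz(3,4) t_def by linarith
  qed
  obtain lam where lam: "Lmin \<le> lam" "lam \<le> K"
    "\<And>y z. y\<in>S \<Longrightarrow> z\<in>S \<Longrightarrow> y \<noteq> z \<Longrightarrow> lam * dist y z \<le> dist (f i y) (f i z) \<and> dist (f i y) (f i z) \<le> (lam + 4*Cmax*t) * dist y z"
    using stp[OF i(1) SU t0 t1 pw] by blast
  have lam1: "1 \<le> lam" using lam Lm by simp
  define c where "c = 4*Cmax*t"
  have c0: "0 \<le> c" unfolding c_def using Cm t0 by simp
    have img: "(f i \<circ> g) ` (ball x r \<inter> X) \<subseteq> X" using maps[OF i(1)] SU unfolding S_def B_def by auto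
    have one: "1 \<le> m*lam" using m1 lam1 mult_mono[of 1 m 1 lam] by simp
    have mL: "m*Lmin \<le> m*lam" using lam m1 by simp
    have "m*lam \<le> (r0/r)*K" using mlt lam m1 lam1 by (intro mult_mono) auto
    then have mK2: "m*lam \<le> K*r0/r" by (simp add: mult.commute)
  have bnd: "\<forall>y\<in>ball x r \<inter> X. \<forall>z\<in>ball x r \<inter> X. m * lam * dist y z \<le> dist ((f i \<circ> g) y) ((f i \<circ> g) z) \<and>
          dist ((f i \<circ> g) y) ((f i \<circ> g) z) \<le> M0 * (lam + c) * dist y z"
  proof (intro ballI)
    fix y z assume yz: "y \<in> ball x r \<inter> X" "z \<in> ball x r \<inter> X"
    then have yzB: "y\<in>B" "z\<in>B" unfolding B_def by auto
    show "m * lam * dist y z \<le> dist ((f i \<circ> g) y) ((f i \<circ> g) z) \<and>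
          dist ((f i \<circ> g) y) ((f i \<circ> g) z) \<le> M0 * (lam + c) * dist y z"
    proof (cases "y = z")
      case False
      then have dpos: "0 < dist y z" by simp
      then have "0 < m*dist y z" using m1 by simp
      then have gne: "g y \<noteq> g z" using bd0(1)[OF yzB] by auto
      have gS: "g y \<in> S" "g z \<in> S" unfolding S_def using yzB by auto
      note L = lam(3)[OF gS gne, folded c_def]
      have "m * lam * dist y z = lam * (m*dist y z)" by simp
      also have "\<dots> \<le> lam * dist (g y) (g z)" using bd0(1)[OF yzB] lam1 by simp
      also have "\<dots> \<le> dist ((f i \<circ> g) y) ((f i \<circ> g) z)" using L by simp
      finally have 1: "m * lam * dist y z \<le> dist ((f i \<circ> g) y) ((f i \<circ> g) z)" .
      have "dist ((f i \<circ> g) y) ((f i \<circ> g) z) \<le> (lam + c) * dist (g y) (g z)" using L by simp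
      also have "\<dots> \<le> (lam + c) * (M0*dist y z)" using bd0(2)[OF yzB] lam1 c0 by (intro mult_left_mono) auto
      finally have 2: "dist ((f i \<circ> g) y) ((f i \<circ> g) z) \<le> M0 * (lam + c) * dist y z" by (simp add: ac_simps)
      show ?thesis using 1 2 by simp
    qed simp
  qed
    have a: "lam + c \<le> lam * exp c"
    proof -
      have "lam + c \<le> lam * (1 + c)" using lam1 c0 by (simp add: algebra_simps) (metis mult_le_cancel_right1 mult.commute c0 lam1 le_less not_le mult_le_cancel_left1)
      also have "\<dots> \<le> lam * exp c" using lam1 by (intro mult_left_mono) auto
      finally show ?thesis .
    qed
    have cb: "c \<le> 16*Cmax*r*m"
    proof -
      have "t \<le> 4*r*m" unfolding t_def using M02 r by simp
      then have "4*Cmax*t \<le> 4*Cmax*(4*r*m)" using Cm by (intro mult_left_mono) auto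
      then show ?thesis unfolding c_def by simp
    qed
    have AL: "A*(Lmin-1) = 8*Cmax" using Adef Lm by simp
    have "16*Cmax*r*m = 2*r*m*(A*(Lmin-1))" using AL by simp
    also have "\<dots> \<le> 2*r*m*(A*(lam-1))" using r m1 A0 lam by (intro mult_left_mono) auto
    finally have "c \<le> 2*A*r*m*(lam-1)" using cb by (simp add: ac_simps)
    then have ex: "2*A*r*m + c \<le> 2*A*r*(m*lam)" by (simp add: algebra_simps)
    have "M0*(lam + c) \<le> (m*exp(2*A*r*m))*(lam*exp c)"
      using M0e a M0m lam1 c0 by (intro mult_mono) auto
    also have "\<dots> = (m*lam)*exp(2*A*r*m + c)" by (simp add: exp_add)
    also have "\<dots> \<le> (m*lam)*exp(2*A*r*(m*lam))" using ex m1 lam1 by (intro mult_left_mono) auto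
    finally have Mb: "M0*(lam + c) \<le> m*lam*exp(2*A*r*(m*lam))" .
  show ?thesis
    by (rule exI[of _ "f i \<circ> g"], rule exI[of _ "m*lam"], rule exI[of _ "M0*(lam + c)"]) (intro conjI img one mK2 mL bnd Mb)
qed

lemma iter:
  assumes r: "0<r" and x: "x \<in> X"
  shows "\<forall>g m M. g ` (ball x r \<inter> X) \<subseteq> X \<and> 1 \<le> m \<and>
     (\<forall>y\<in>ball x r \<inter> X. \<forall>z\<in>ball x r \<inter> X. m*dist y z \<le> dist (g y) (g z) \<and> dist (g y) (g z) \<le> M*dist y z)
     \<and> M \<le> m*exp(2*A*r*m) \<and> m \<le> K*r0/r \<and> r0/r \<le> m*Lmin^n \<longrightarrow>
     (\<exists>F. F ` (ball x r \<inter> X) \<subseteq> X \<and> (\<forall>y\<in>ball x r \<inter> X. \<forall>z\<in>ball x r \<inter> X.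
           (1/(2*K))*(r0/r)*dist y z \<le> dist (F y) (F z) \<and> dist (F y) (F z) \<le> (2*K)*(r0/r)*dist y z))"
proof (induction n)
  case 0
  show ?case
  proof (intro allI impI)
    fix g m M
    assume H: "g ` (ball x r \<inter> X) \<subseteq> X \<and> 1 \<le> m \<and>
     (\<forall>y\<in>ball x r \<inter> X. \<forall>z\<in>ball x r \<inter> X. m*dist y z \<le> dist (g y) (g z) \<and> dist (g y) (g z) \<le> M*dist y z)
     \<and> M \<le> m*exp(2*A*r*m) \<and> m \<le> K*r0/r \<and> r0/r \<le> m*Lmin^0"
    then have "r0/r \<le> m" by simp
    then show "\<exists>F. F ` (ball x r \<inter> X) \<subseteq> X \<and> (\<forall>y\<in>ball x r \<inter> X. \<forall>z\<in>ball x r \<inter> X.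
           (1/(2*K))*(r0/r)*dist y z \<le> dist (F y) (F z) \<and> dist (F y) (F z) \<le> (2*K)*(r0/r)*dist y z)"
      using stop_case[OF r, where g=g and m=m and M=M] H by blast
  qed
next
  case (Suc n)
  show ?case
  proof (intro allI impI)
    fix g m M
    assume H: "g ` (ball x r \<inter> X) \<subseteq> X \<and> 1 \<le> m \<and>
     (\<forall>y\<in>ball x r \<inter> X. \<forall>z\<in>ball x r \<inter> X. m*dist y z \<le> dist (g y) (g z) \<and> dist (g y) (g z) \<le> M*dist y z)
     \<and> M \<le> m*exp(2*A*r*m) \<and> m \<le> K*r0/r \<and> r0/r \<le> m*Lmin^Suc n"
    show "\<exists>F. F ` (ball x r \<inter> X) \<subseteq> X \<and> (\<forall>y\<in>ball x r \<inter> X. \<forall>z\<in>ball x r \<inter> X.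
           (1/(2*K))*(r0/r)*dist y z \<le> dist (F y) (F z) \<and> dist (F y) (F z) \<le> (2*K)*(r0/r)*dist y z)"
    proof (cases "r0/r \<le> m")
      case True
      then show ?thesis using stop_case[OF r] H by blast
    next
      case False
      then have "m < r0/r" by simp
      then obtain g' m' M' where G: "g' ` (ball x r \<inter> X) \<subseteq> X \<and> 1 \<le> m' \<and>
     (\<forall>y\<in>ball x r \<inter> X. \<forall>z\<in>ball x r \<inter> X. m'*dist y z \<le> dist (g' y) (g' z) \<and> dist (g' y) (g' z) \<le> M'*dist y z)
     \<and> M' \<le> m'*exp(2*A*r*m') \<and> m' \<le> K*r0/r \<and> m*Lmin \<le> m'"
        using step_case[OF r x, where g=g and m=m and M=M] H by blast
      have "r0/r \<le> (m*Lmin)*Lmin^n" using H by (simp add: ac_simps)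
      also have "\<dots> \<le> m'*Lmin^n" using G Lm by (intro mult_right_mono) auto
      finally have "r0/r \<le> m'*Lmin^n" .
      then show ?thesis using Suc.IH G by blast
    qed
  qed
qed

end

theorem theorem6p1:
  fixes X :: "'a::metric_space set"
    and N :: nat
    and U :: "nat \<Rightarrow> 'a set"
    and f :: "nat \<Rightarrow> 'a \<Rightarrow> 'a"
    and L \<alpha> C :: "nat \<Rightarrow> real"
  assumes "compact X"
    and "\<And>i. i \<in> {1..N} \<Longrightarrow> openin (top_of_set X) (U i)"
    and "X = (\<Union>i\<in>{1..N}. U i)"
    and "\<And>i. i \<in> {1..N} \<Longrightarrow> f i ` U i \<subseteq> X"
    and "\<And>i. i \<in> {1..N} \<Longrightarrow> L i > 1 \<and> \<alpha> i \<ge> 1 \<and> C i > 0"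
    and "\<And>i x y. \<lbrakk>i \<in> {1..N}; x \<in> U i; y \<in> U i; x \<noteq> y\<rbrakk>
           \<Longrightarrow> dist (f i x) (f i y) \<ge> L i * dist x y"
    and "\<And>i x y z. \<lbrakk>i \<in> {1..N}; x \<in> U i; y \<in> U i; z \<in> U i; x \<noteq> y; x \<noteq> z\<rbrakk>
           \<Longrightarrow> dist (f i x) (f i y) / dist x y - dist (f i x) (f i z) / dist x z
               \<le> C i * diameter {x, y, z} powr \<alpha> i"
  shows "quasi_self_similar X"
proof (cases "X = {}")
  case True
  then show ?thesis unfolding quasi_self_similar_def by (intro exI[of _ 1]) auto
next
  case False
  define I where "I = {1..N}"
  have I: "finite I" "I \<noteq> {}" using False assms(3) unfolding I_def by auto
  have UX: "U i \<subseteq> X" if "i \<in> I" for i using assms(3) that unfolding I_def by blast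
  define Lmin where "Lmin = Min (L ` I)"
  have Lm: "1 < Lmin" unfolding Lmin_def using I assms(5) unfolding I_def by (simp add: Min_gr_iff)
  have LmL: "Lmin \<le> L i" if "i \<in> I" for i unfolding Lmin_def using I that by simp
  define Cmax where "Cmax = (\<Sum>i\<in>I. C i)"
  have CC: "C i \<le> Cmax" if "i \<in> I" for i
    unfolding Cmax_def using I that assms(5) unfolding I_def by (intro member_le_sum) (auto intro: less_imp_le)
  have Cm: "0 \<le> Cmax" unfolding Cmax_def using assms(5) unfolding I_def by (intro sum_nonneg) (auto intro: less_imp_le)
  have "\<forall>i\<in>I. \<exists>Mr. \<forall>a\<in>U i. \<forall>b\<in>U i. a \<noteq> b \<longrightarrow> dist a b \<le> 1 \<longrightarrow> dist (f i a) (f i b)/dist a b \<le> Mr"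
  proof
    fix i assume i: "i \<in> I"
    have p: "1 < L i" "1 \<le> \<alpha> i" "0 < C i" using i assms(5) unfolding I_def by auto
    then have p2: "0 \<le> \<alpha> i" "0 \<le> C i" by auto
    show "\<exists>Mr. \<forall>a\<in>U i. \<forall>b\<in>U i. a \<noteq> b \<longrightarrow> dist a b \<le> 1 \<longrightarrow> dist (f i a) (f i b)/dist a b \<le> Mr"
      by (rule ratio_bound[OF assms(1) UX[OF i], where Ci="C i" and ai="\<alpha> i"])
         (use i assms(7) p2 in \<open>auto simp: I_def\<close>)
  qed
  then obtain Mrf where Mrf: "\<And>i a b. i\<in>I \<Longrightarrow> a\<in>U i \<Longrightarrow> b\<in>U i \<Longrightarrow> a \<noteq> b \<Longrightarrow> dist a b \<le> 1 \<Longrightarrow> dist (f i a) (f i b)/dist a b \<le> Mrf i"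
    by metis
  define Mr where "Mr = (\<Sum>i\<in>I. \<bar>Mrf i\<bar>)"
  have MrM: "Mrf i \<le> Mr" if "i \<in> I" for i
  proof -
    have "\<bar>Mrf i\<bar> \<le> Mr" unfolding Mr_def using I that by (intro member_le_sum) auto
    then show ?thesis by simp
  qed
  define K where "K = max Lmin Mr"
  have KL: "Lmin \<le> K" unfolding K_def by simp
  define A where "A = 8*Cmax/(Lmin-1)"
  have A0: "0 \<le> A" unfolding A_def using Cm Lm by simp
  have K1: "1 \<le> K" using KL Lm by simp
  obtain \<delta> where d: "0 < \<delta>" "\<And>a. a\<in>X \<Longrightarrow> \<exists>i\<in>{1..N}. X \<inter> ball a \<delta> \<subseteq> U i"
    using lebesgue_balls[OF assms(1) assms(2) assms(3)] I unfolding I_def by blast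
  define r0 where "r0 = min (1/4) (min (\<delta>/2) (ln 2/(2*A*K+1)))"
  have AK: "0 \<le> 2*A*K" using A0 K1 by simp
  have r0pos: "0 < r0" unfolding r0_def using d AK by simp
  have r0a: "4*r0 \<le> 1" "2*r0 \<le> \<delta>" unfolding r0_def by auto
  have "r0 \<le> ln 2/(2*A*K+1)" unfolding r0_def by simp
  moreover have "0 < 2*A*K+1" using AK by simp
  ultimately have "r0*(2*A*K+1) \<le> ln 2" by (simp add: pos_le_divide_eq)
  then have "(2*A*K+1)*r0 \<le> ln 2" by (simp add: mult.commute)
  then have "2*A*K*r0 \<le> ln 2" using r0pos by (simp add: algebra_simps)
  then have r0e: "exp(2*A*K*r0) \<le> 2" by (metis exp_le_cancel_iff exp_ln zero_less_numeral)
  have stp: "\<exists>lam. Lmin \<le> lam \<and> lam \<le> K \<and> (\<forall>y\<in>S. \<forall>z\<in>S. y \<noteq> z \<longrightarrow>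
          lam * dist y z \<le> dist (f i y) (f i z) \<and> dist (f i y) (f i z) \<le> (lam + 4*Cmax*t) * dist y z)"
    if "i\<in>{1..N}" "S \<subseteq> U i" "0 \<le> t" "t \<le> 1" "\<And>y z. y\<in>S \<Longrightarrow> z\<in>S \<Longrightarrow> dist y z \<le> t" for i S t
    unfolding K_def
  proof (rule step_lemma[where U="U i" and Li="L i" and Ci="C i" and ai="\<alpha> i"])
    show "\<And>x y. x\<in>U i \<Longrightarrow> y\<in>U i \<Longrightarrow> x\<noteq>y \<Longrightarrow> dist (f i x) (f i y) \<ge> L i * dist x y"
      using assms(6) that(1) by blast
    show "\<And>x y z. x\<in>U i \<Longrightarrow> y\<in>U i \<Longrightarrow> z\<in>U i \<Longrightarrow> x\<noteq>y \<Longrightarrow> x\<noteq>z \<Longrightarrow>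
      dist (f i x) (f i y)/dist x y - dist (f i x) (f i z)/dist x z \<le> C i * diameter {x,y,z} powr \<alpha> i"
      using assms(7) that(1) by blast
    show "\<And>a b. a\<in>U i \<Longrightarrow> b\<in>U i \<Longrightarrow> a \<noteq> b \<Longrightarrow> dist a b \<le> 1 \<Longrightarrow> dist (f i a) (f i b)/dist a b \<le> Mr"
      using Mrf MrM that(1) unfolding I_def by (meson order_trans)
    show "Lmin \<le> L i" using LmL that(1) unfolding I_def by blast
    show "0 \<le> C i" "C i \<le> Cmax" "1 \<le> \<alpha> i" using assms(5) CC that(1) unfolding I_def by (auto intro: less_imp_le)
  qed (use that in auto)
  have IT: "\<forall>g m M. g ` (ball x r \<inter> X) \<subseteq> X \<and> 1 \<le> m \<and>
     (\<forall>y\<in>ball x r \<inter> X. \<forall>z\<in>ball x r \<inter> X. m*dist y z \<le> dist (g y) (g z) \<and> dist (g y) (g z) \<le> M*dist y z)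
     \<and> M \<le> m*exp(2*A*r*m) \<and> m \<le> K*r0/r \<and> r0/r \<le> m*Lmin^n \<longrightarrow>
     (\<exists>F. F ` (ball x r \<inter> X) \<subseteq> X \<and> (\<forall>y\<in>ball x r \<inter> X. \<forall>z\<in>ball x r \<inter> X.
           (1/(2*K))*(r0/r)*dist y z \<le> dist (F y) (F z) \<and> dist (F y) (F z) \<le> (2*K)*(r0/r)*dist y z))"
    if "0 < r" "x \<in> X" for r x n
  proof (rule iter[where X=X and N=N and U=U and f=f and Cmax=Cmax and \<delta>=\<delta>])
    show "\<And>i S t. i\<in>{1..N} \<Longrightarrow> S \<subseteq> U i \<Longrightarrow> 0 \<le> t \<Longrightarrow> t \<le> 1 \<Longrightarrow>
        (\<And>y z. y\<in>S \<Longrightarrow> z\<in>S \<Longrightarrow> dist y z \<le> t) \<Longrightarrow>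
        \<exists>lam. Lmin \<le> lam \<and> lam \<le> K \<and> (\<forall>y\<in>S. \<forall>z\<in>S. y \<noteq> z \<longrightarrow>
          lam * dist y z \<le> dist (f i y) (f i z) \<and> dist (f i y) (f i z) \<le> (lam + 4*Cmax*t) * dist y z)"
      by (rule stp)
    show "\<And>i. i\<in>{1..N} \<Longrightarrow> f i ` U i \<subseteq> X" by (rule assms(4))
    show "\<And>a. a\<in>X \<Longrightarrow> \<exists>i\<in>{1..N}. X \<inter> ball a \<delta> \<subseteq> U i" by (rule d(2))
  qed (use Lm Cm KL A_def r0pos r0a r0e that in auto)
  have H1: "1 \<le> 2*K" using K1 by simp
  have main: "\<forall>x\<in>X. \<forall>r. 0 < r \<and> r < r0 \<longrightarrow> (\<exists>F. F ` (ball x r \<inter> X) \<subseteq> X \<and> (\<forall>y\<in>ball x r \<inter> X. \<forall>z\<in>ball x r \<inter> X.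
           1 / (2*K) * (r0/r) * dist y z \<le> dist (F y) (F z) \<and> dist (F y) (F z) \<le> 2*K * (r0/r) * dist y z))"
  proof (intro ballI allI impI)
    fix x r assume x: "x \<in> X" and r: "0 < r \<and> r < r0"
    obtain n where n: "r0/r < Lmin^n" using real_arch_pow[OF Lm] by blast
    have rr: "1 < r0/r" using r by simp
    have "1 \<le> exp(2*A*r*1)" using A0 r by simp
    moreover have "1 \<le> K*r0/r"
    proof -
      have "1*1 \<le> K*(r0/r)" using K1 rr by (intro mult_mono) auto
      then show ?thesis by simp
    qed
    ultimately show "\<exists>F. F ` (ball x r \<inter> X) \<subseteq> X \<and> (\<forall>y\<in>ball x r \<inter> X. \<forall>z\<in>ball x r \<inter> X.
           1 / (2*K) * (r0/r) * dist y z \<le> dist (F y) (F z) \<and> dist (F y) (F z) \<le> 2*K * (r0/r) * dist y z)"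
      using IT[OF conjunct1[OF r] x, where n=n, rule_format, of id 1 1] r x n by auto
  qed
  show ?thesis unfolding quasi_self_similar_def using r0pos H1 main by blast
qed

end
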